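(* Define the affine maps of $\mathbb{C}$ \[ L_0(t) = \tfrac{9}{10} t - \tfrac{9}{100},\quad L_1(t) = \tfrac{9}{10} t - \tfrac{9i}{100},\quad L_2(t) = \tfrac{9}{10} t + \tfrac{9}{100},\quad L_3(t) = \tfrac{9}{10} t + \tfrac{9i}{100}. \] Then for every $t \in \mathbb{D}(0,1/2)$ there exist $\tau \in \mathbb{D}(0, 0.497)$ and $j \in \{0,1,2,3\}$ such that $t = L_j(\tau)$.
   Context: $\mathbb{D}(z,r)\subset\mathbb{C}$ denotes the closed disk of center $z$ and radius $r$. *)

theory Defs
  imports "HOL-Analysis.Analysis"
begin

definition L :: "nat \<Rightarrow> complex \<Rightarrow> complex" where
  "L j t = (if j = 0 then (9/10) * t - 9/100
            else if j = 1 then (9/10) * t - 9 * \<i> / 100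
            else if j = 2 then (9/10) * t + 9/100
            else (9/10) * t + 9 * \<i> / 100)"

end

theory Submission
  imports Defs
begin

lemma key:
  fixes x y :: real
  assumes "x^2 + y^2 \<le> 1/4" "y^2 \<le> x^2" "x \<ge> 0"
  shows "(x - 9/100)^2 + y^2 \<le> (4473/10000)^2"
proof (cases "x \<ge> 33/100")
  case True then show ?thesis using assms by (simp add: power2_eq_square algebra_simps)
next
  case False
  have "x * (x - 33/100) \<le> 0" using False assms(3) by (simp add: mult_nonneg_nonpos)
  then show ?thesis using assms by (simp add: power2_eq_square algebra_simps)
qed

lemma norm_bound:
  fixes z :: complex
  assumes "(Re z)^2 + (Im z)^2 \<le> (4473/10000)^2"
  shows "z * (10/9) \<in> cball 0 (497/1000)"
proof -
  have "cmod z \<le> 4473/10000"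
  proof -
    have "sqrt ((Re z)^2 + (Im z)^2) \<le> sqrt ((4473/10000)^2)"
      using assms by (rule real_sqrt_le_mono)
    then show ?thesis unfolding cmod_def by simp
  qed
  then have "cmod z * (10/9) \<le> 497/1000" by simp
  then show ?thesis by (simp add: norm_mult)
qed

theorem mainTheorem5:
  fixes t :: complex
  assumes "t \<in> cball 0 (1/2)"
  shows "\<exists>\<tau> \<in> cball 0 (497/1000). \<exists>j \<in> {0,1,2,3::nat}. t = L j \<tau>"
proof -
  define x where "x = Re t"
  define y where "y = Im t"
  have "cmod t \<le> 1/2" using assms by simp
  then have "sqrt (x^2 + y^2) \<le> 1/2" unfolding cmod_def x_def y_def .
  then have "(sqrt (x^2 + y^2))^2 \<le> (1/2)^2" by (intro power_mono) auto
  then have r: "x^2 + y^2 \<le> 1/4" by (simp add: power2_eq_square)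
  have "(\<bar>y\<bar> \<le> x) \<or> (\<bar>y\<bar> \<le> -x) \<or> (\<bar>x\<bar> \<le> y) \<or> (\<bar>x\<bar> \<le> -y)" by linarith
  then show ?thesis
  proof (elim disjE)
    assume h: "\<bar>y\<bar> \<le> x"
    have "y^2 \<le> x^2" using h by (metis abs_ge_zero abs_le_square_iff abs_of_nonneg order_trans)
    then have "(x - 9/100)^2 + y^2 \<le> (4473/10000)^2" using key r h by force
    then have "(t - 9/100) * (10/9) \<in> cball 0 (497/1000)"
      by (intro norm_bound) (simp add: x_def y_def)
    moreover have "t = L 2 ((t - 9/100) * (10/9))" by (simp add: L_def field_simps)
    ultimately show ?thesis by blast
  next
    assume h: "\<bar>y\<bar> \<le> -x"
    have "y^2 \<le> (-x)^2" using h by (metis abs_ge_zero abs_le_square_iff abs_of_nonneg order_trans)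
    then have "(-x - 9/100)^2 + y^2 \<le> (4473/10000)^2" using key[of "-x" y] r h by force
    then have "(t + 9/100) * (10/9) \<in> cball 0 (497/1000)"
      by (intro norm_bound) (simp add: x_def y_def power2_eq_square algebra_simps)
    moreover have "t = L 0 ((t + 9/100) * (10/9))" by (simp add: L_def field_simps)
    ultimately show ?thesis by blast
  next
    assume h: "\<bar>x\<bar> \<le> y"
    have "x^2 \<le> y^2" using h by (metis abs_ge_zero abs_le_square_iff abs_of_nonneg order_trans)
    then have "(y - 9/100)^2 + x^2 \<le> (4473/10000)^2" using key[of y x] r h by force
    then have "(t - 9 * \<i> / 100) * (10/9) \<in> cball 0 (497/1000)"
      by (intro norm_bound) (simp add: x_def y_def power2_eq_square algebra_simps)
    moreover have "t = L 3 ((t - 9 * \<i> / 100) * (10/9))" by (simp add: L_def field_simps)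
    ultimately show ?thesis by blast
  next
    assume h: "\<bar>x\<bar> \<le> -y"
    have "x^2 \<le> (-y)^2" using h by (metis abs_ge_zero abs_le_square_iff abs_of_nonneg order_trans)
    then have "(-y - 9/100)^2 + x^2 \<le> (4473/10000)^2" using key[of "-y" x] r h by force
    then have "(t + 9 * \<i> / 100) * (10/9) \<in> cball 0 (497/1000)"
      by (intro norm_bound) (simp add: x_def y_def power2_eq_square algebra_simps)
    moreover have "t = L 1 ((t + 9 * \<i> / 100) * (10/9))" by (simp add: L_def field_simps)
    ultimately show ?thesis by blast
  qed
qed

end
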